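(* For every $i\in\{1,\dots,n\}$, the collision-avoidance command $\mathbf p\mapsto v_i^{\mathrm{cv}}(\mathbf p)$ is locally Lipschitz on $\mathbb{R}^{dn}$.
   Context: $n\ge2$ robots with positions $p_i\in\mathbb{R}^d$, $\mathbf p=[p_1^\top,\dots,p_n^\top]^\top\in\mathbb{R}^{dn}$; sample points $q_1,\dots,q_m\in\mathbb{R}^d$; constants $\beta>0$, $\sigma_1>0$, $\sigma_2>0$, $\varepsilon\in(0,1)$, $r_{\mathrm{avoid}}>0$. Mass: $P_k(\mathbf p)=\frac1n\sum_{i=1}^n e^{-\beta\|q_k-p_i\|^2}$. Meanshift command: $v_i^{\mathrm{ms}}(\mathbf p)=\dfrac{\frac{\sigma_1}{m}\sum_{k=1}^m P_k(\mathbf p)^{-1}e^{-\beta\|q_k-p_i\|^2}(q_k-p_i)}{\sum_{k=1}^m P_k(\mathbf p)^{-1}e^{-\beta\|q_k-p_i\|^2}}$. Repulsive term: $\tilde v_i^{\mathrm{cv}}=\sigma_2\sum_{j\ne i,\ \|p_i-p_j\|\le r_{\mathrm{avoid}}}\frac{r_{\mathrm{avoid}}-\|p_i-p_j\|}{\|p_i-p_j\|+\varepsilon}(p_i-p_j)$. With $\varphi=\min\{\|v_i^{\mathrm{ms}}\|^2/\varepsilon,1\}$, the gain is $\kappa_2=\varphi$ if $(v_i^{\mathrm{ms}})^\top\tilde v_i^{\mathrm{cv}}\ge0$ and $\kappa_2=\varphi\min\{-(1-\varepsilon)\|v_i^{\mathrm{ms}}\|^2/((v_i^{\mathrm{ms}})^\top\tilde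 v_i^{\mathrm{cv}}),1\}$ if $(v_i^{\mathrm{ms}})^\top\tilde v_i^{\mathrm{cv}}<0$; collision-avoidance command $v_i^{\mathrm{cv}}=\kappa_2\tilde v_i^{\mathrm{cv}}$. *)

theory Defs
  imports "HOL-Analysis.Analysis"
begin

text \<open>Robots are indexed by a finite type 'n (n = CARD('n)), positions live in
  'a :: euclidean_space (R^d, d = DIM('a)); a configuration is p :: 'a ^ 'n (the
  stacked vector in R^(dn), with Euclidean norm). Sample points q are indexed by a
  finite type 'm (m = CARD('m)).\<close>

definition locally_lipschitz_on :: "'a::metric_space set \<Rightarrow> ('a \<Rightarrow> 'b::metric_space) \<Rightarrow> bool" where
  "locally_lipschitz_on X f \<longleftrightarrow>
     (\<forall>x\<in>X. \<exists>e>0. \<exists>L. L-lipschitz_on (cball x e \<inter> X) f)"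

definition mass :: "real \<Rightarrow> ('m::finite \<Rightarrow> 'a::euclidean_space) \<Rightarrow> 'a ^ 'n::finite \<Rightarrow> 'm \<Rightarrow> real" where
  "mass \<beta> q p k = (1 / real CARD('n)) * (\<Sum>i\<in>UNIV. exp (- \<beta> * (norm (q k - p $ i))\<^sup>2))"

definition v_ms :: "real \<Rightarrow> real \<Rightarrow> ('m::finite \<Rightarrow> 'a::euclidean_space) \<Rightarrow> 'a ^ 'n::finite \<Rightarrow> 'n \<Rightarrow> 'a" where
  "v_ms \<beta> \<sigma>1 q p i =
     (1 / (\<Sum>k\<in>UNIV. inverse (mass \<beta> q p k) * exp (- \<beta> * (norm (q k - p $ i))\<^sup>2))) *\<^sub>R
     ((\<sigma>1 / real CARD('m)) *\<^sub>R
       (\<Sum>k\<in>UNIV. (inverse (mass \<beta> q p k) * exp (- \<beta> * (norm (q k - p $ i))\<^sup>2)) *\<^sub>R (q k - p $ i)))"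

definition v_rep :: "real \<Rightarrow> real \<Rightarrow> real \<Rightarrow> 'a::euclidean_space ^ 'n::finite \<Rightarrow> 'n \<Rightarrow> 'a" where
  "v_rep \<sigma>2 \<epsilon> r p i =
     \<sigma>2 *\<^sub>R (\<Sum>j\<in>{j. j \<noteq> i \<and> norm (p $ i - p $ j) \<le> r}.
        ((r - norm (p $ i - p $ j)) / (norm (p $ i - p $ j) + \<epsilon>)) *\<^sub>R (p $ i - p $ j))"

definition kappa2 :: "real \<Rightarrow> 'a::real_inner \<Rightarrow> 'a \<Rightarrow> real" where
  "kappa2 \<epsilon> v w =
     (let \<phi> = min ((norm v)\<^sup>2 / \<epsilon>) 1 in
      if inner v w \<ge> 0 then \<phi>
      else \<phi> * min (- (1 - \<epsilon>) * (norm v)\<^sup>2 / inner v w) 1)"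

definition v_cv :: "real \<Rightarrow> real \<Rightarrow> real \<Rightarrow> real \<Rightarrow> real \<Rightarrow> ('m::finite \<Rightarrow> 'a::euclidean_space)
    \<Rightarrow> 'a ^ 'n::finite \<Rightarrow> 'n \<Rightarrow> 'a" where
  "v_cv \<beta> \<sigma>1 \<sigma>2 \<epsilon> r q p i =
     kappa2 \<epsilon> (v_ms \<beta> \<sigma>1 q p i) (v_rep \<sigma>2 \<epsilon> r p i) *\<^sub>R v_rep \<sigma>2 \<epsilon> r p i"

end

theory Submission
  imports Defs
begin


definition LL :: "('a::metric_space \<Rightarrow> 'b::metric_space) \<Rightarrow> bool" where
  "LL f \<longleftrightarrow> (\<forall>x. \<exists>e>0. \<exists>L. L-lipschitz_on (cball x e) f)"

lemma LLI: "(\<And>x. \<exists>e>0. \<exists>L. L-lipschitz_on (cball x e) f) \<Longrightarrow> LL f"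
  by (auto simp: LL_def)

lemma LLE:
  assumes "LL f"
  obtains e L where "e > 0" "L \<ge> 0" "L-lipschitz_on (cball x e) f"
  using assms lipschitz_on_nonneg unfolding LL_def by blast

lemma lip_shrink: "L-lipschitz_on (cball x e) f \<Longrightarrow> e' \<le> e \<Longrightarrow> L-lipschitz_on (cball x e') f"
  by (erule lipschitz_on_subset) auto

lemma lip_bound:
  fixes f :: "'a::metric_space \<Rightarrow> 'b::real_normed_vector"
  assumes "L-lipschitz_on (cball x e) f" "y \<in> cball x e"
  shows "norm (f y) \<le> norm (f x) + L * e"
proof -
  have "0 \<le> dist x y" by simp
  moreover have "dist x y \<le> e" using assms(2) by simp
  ultimately have "e \<ge> 0" by linarith
  have "dist (f y) (f x) \<le> L * dist y x" using assms \<open>e \<ge> 0\<close> by (intro lipschitz_onD) auto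
  also have "\<dots> \<le> L * e" using assms lipschitz_on_nonneg[OF assms(1)] \<open>e \<ge> 0\<close>
    by (intro mult_left_mono) (auto simp: dist_commute)
  finally have "norm (f y - f x) \<le> L * e" by (simp add: dist_norm)
  moreover have "norm (f y) \<le> norm (f x) + norm (f y - f x)" by (rule norm_triangle_sub)
  ultimately show ?thesis by linarith
qed

lemma LL_const: "LL (\<lambda>x. c)"
proof (rule LLI)
  fix x :: 'a
  show "\<exists>e>0. \<exists>L. L-lipschitz_on (cball x e) (\<lambda>x. c)"
    using lipschitz_on_constant[of "cball x 1" c] by (intro exI[of _ 1]) auto
qed

lemma LL_bounded_linear: "bounded_linear f \<Longrightarrow> LL f"
proof (rule LLI)
  fix x assume "bounded_linear f"
  then obtain B where "B-lipschitz_on (cball x 1) f" by (rule bounded_linear.lipschitz_boundE)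
  then show "\<exists>e>0. \<exists>L. L-lipschitz_on (cball x e) f" by (intro exI[of _ 1]) auto
qed

lemma LL_compose:
  assumes f: "LL f" and g: "LL g"
  shows "LL (\<lambda>x. g (f x))"
proof (rule LLI)
  fix x
  obtain e1 L1 where e1: "e1 > 0" "L1 \<ge> 0" "L1-lipschitz_on (cball x e1) f" using LLE[OF f] .
  obtain e2 L2 where e2: "e2 > 0" "L2 \<ge> 0" "L2-lipschitz_on (cball (f x) e2) g" using LLE[OF g] .
  define e where "e = min e1 (e2 / (L1 + 1))"
  have e: "e > 0" "e \<le> e1" "e \<le> e2 / (L1 + 1)" using e1 e2 by (auto simp: e_def)
  have l1: "L1-lipschitz_on (cball x e) f" using lip_shrink[OF e1(3) e(2)] .
  have sub: "f ` cball x e \<subseteq> cball (f x) e2"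
  proof
    fix z assume "z \<in> f ` cball x e"
    then obtain y where y: "y \<in> cball x e" "z = f y" by auto
    have "dist (f x) (f y) \<le> L1 * dist x y" using l1 y e by (intro lipschitz_onD) auto
    also have "\<dots> \<le> L1 * (e2 / (L1 + 1))" using y e e1 by (intro mult_left_mono) auto
    also have "\<dots> \<le> e2" using e1 e2 by (simp add: field_simps)
    finally show "z \<in> cball (f x) e2" using y by auto
  qed
  have "(L2 * L1)-lipschitz_on (cball x e) (\<lambda>x. g (f x))"
    by (rule lipschitz_on_compose2[OF l1 lipschitz_on_subset[OF e2(3) sub]])
  then show "\<exists>e>0. \<exists>L. L-lipschitz_on (cball x e) (\<lambda>x. g (f x))" using e by blast
qed

lemma LL_two:
  assumes f: "LL f" and g: "LL g"
  obtains e L1 L2 where "e > 0" "L1 \<ge> 0" "L2 \<ge> 0" "L1-lipschitz_on (cball x e) f"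
    "L2-lipschitz_on (cball x e) g"
proof -
  obtain e1 L1 where e1: "e1 > 0" "L1 \<ge> 0" "L1-lipschitz_on (cball x e1) f" using LLE[OF f] .
  obtain e2 L2 where e2: "e2 > 0" "L2 \<ge> 0" "L2-lipschitz_on (cball x e2) g" using LLE[OF g] .
  show ?thesis
    by (rule that[of "min e1 e2" L1 L2]) (use e1 e2 lip_shrink[of L1 x e1 f "min e1 e2"] lip_shrink[of L2 x e2 g "min e1 e2"] in auto)
qed

lemma LL_add:
  fixes f g :: "'a::metric_space \<Rightarrow> 'b::real_normed_vector"
  assumes f: "LL f" and g: "LL g"
  shows "LL (\<lambda>x. f x + g x)"
proof (rule LLI)
  fix x
  obtain e L1 L2 where "e > 0" "L1-lipschitz_on (cball x e) f" "L2-lipschitz_on (cball x e) g"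
    using LL_two[OF f g] by metis
  then show "\<exists>e>0. \<exists>L. L-lipschitz_on (cball x e) (\<lambda>x. f x + g x)"
    by (blast intro: lipschitz_on_add)
qed

lemma LL_diff:
  fixes f g :: "'a::metric_space \<Rightarrow> 'b::real_normed_vector"
  assumes f: "LL f" and g: "LL g"
  shows "LL (\<lambda>x. f x - g x)"
proof (rule LLI)
  fix x
  obtain e L1 L2 where "e > 0" "L1-lipschitz_on (cball x e) f" "L2-lipschitz_on (cball x e) g"
    using LL_two[OF f g] by metis
  then show "\<exists>e>0. \<exists>L. L-lipschitz_on (cball x e) (\<lambda>x. f x - g x)"
    by (blast intro: lipschitz_on_diff)
qed

lemma LL_sum:
  fixes f :: "'i \<Rightarrow> 'a::metric_space \<Rightarrow> 'b::real_normed_vector"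
  assumes "finite S" "\<And>k. k \<in> S \<Longrightarrow> LL (f k)"
  shows "LL (\<lambda>x. \<Sum>k\<in>S. f k x)"
  using assms
proof (induction S rule: finite_induct)
  case empty then show ?case by (simp add: LL_const)
next
  case (insert a S)
  then show ?case by (simp add: LL_add)
qed

lemma LL_bilinear:
  assumes bb: "bounded_bilinear pr" and f: "LL f" and g: "LL g"
  shows "LL (\<lambda>x. pr (f x) (g x))"
proof (rule LLI)
  fix x
  obtain e L1 L2 where e: "e > 0" "L1 \<ge> 0" "L2 \<ge> 0" and l1: "L1-lipschitz_on (cball x e) f"
     and l2: "L2-lipschitz_on (cball x e) g"
    using LL_two[OF f g] by metis
  obtain K where K: "K > 0" "\<And>a b. norm (pr a b) \<le> norm a * norm b * K"
    using bounded_bilinear.pos_bounded[OF bb] by blast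
  define Bf where "Bf = norm (f x) + L1 * e"
  define Bg where "Bg = norm (g x) + L2 * e"
  have B0: "0 \<le> Bf" "0 \<le> Bg" using e by (auto simp: Bf_def Bg_def)
  have bf: "\<And>y. y \<in> cball x e \<Longrightarrow> norm (f y) \<le> Bf" using lip_bound[OF l1] by (simp add: Bf_def)
  have bg: "\<And>y. y \<in> cball x e \<Longrightarrow> norm (g y) \<le> Bg" using lip_bound[OF l2] by (simp add: Bg_def)
  have "(K * (L1 * Bg + Bf * L2))-lipschitz_on (cball x e) (\<lambda>x. pr (f x) (g x))"
  proof (rule lipschitz_onI)
    fix y z assume y: "y \<in> cball x e" and z: "z \<in> cball x e"
    have eq: "pr (f y) (g y) - pr (f z) (g z) = pr (f y - f z) (g y) + pr (f z) (g y - g z)"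
      by (simp add: bounded_bilinear.diff_left[OF bb] bounded_bilinear.diff_right[OF bb])
    have n1: "norm (f y - f z) \<le> L1 * dist y z" using lipschitz_onD[OF l1 y z] by (simp add: dist_norm)
    have n2: "norm (g y - g z) \<le> L2 * dist y z" using lipschitz_onD[OF l2 y z] by (simp add: dist_norm)
    have "norm (pr (f y - f z) (g y)) \<le> norm (f y - f z) * norm (g y) * K" by (rule K)
    also have "\<dots> \<le> (L1 * dist y z) * Bg * K"
      using n1 bg[OF y] K e B0 by (intro mult_right_mono mult_mono) auto
    finally have a: "norm (pr (f y - f z) (g y)) \<le> (L1 * dist y z) * Bg * K" .
    have "norm (pr (f z) (g y - g z)) \<le> norm (f z) * norm (g y - g z) * K" by (rule K)
    also have "\<dots> \<le> Bf * (L2 * dist y z) * K"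
      using n2 bf[OF z] K e B0 by (intro mult_right_mono mult_mono) auto
    finally have b: "norm (pr (f z) (g y - g z)) \<le> Bf * (L2 * dist y z) * K" .
    have "dist (pr (f y) (g y)) (pr (f z) (g z)) \<le> norm (pr (f y - f z) (g y)) + norm (pr (f z) (g y - g z))"
      unfolding dist_norm eq by (rule norm_triangle_ineq)
    also have "\<dots> \<le> (L1 * dist y z) * Bg * K + Bf * (L2 * dist y z) * K" using a b by simp
    finally show "dist (pr (f y) (g y)) (pr (f z) (g z)) \<le> K * (L1 * Bg + Bf * L2) * dist y z"
      by (simp add: algebra_simps)
  next
    have "0 \<le> Bf" "0 \<le> Bg" using e by (auto simp: Bf_def Bg_def)
    then show "0 \<le> K * (L1 * Bg + Bf * L2)" using K e by auto
  qed
  then show "\<exists>e>0. \<exists>L. L-lipschitz_on (cball x e) (\<lambda>x. pr (f x) (g x))" using e by blast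
qed

lemmas LL_mult = LL_bilinear[OF bounded_bilinear_mult]
lemmas LL_scaleR = LL_bilinear[OF bounded_bilinear_scaleR]
lemmas LL_inner = LL_bilinear[OF bounded_bilinear_inner]

lemma LL_norm:
  fixes f :: "'a::metric_space \<Rightarrow> 'b::real_normed_vector"
  assumes "LL f" shows "LL (\<lambda>x. norm (f x))"
proof -
  have "LL (\<lambda>y::'b. norm y)"
    by (rule LLI) (auto intro!: exI[of _ 1] lipschitz_onI simp: dist_norm norm_triangle_ineq3)
  then show ?thesis using LL_compose[OF assms] by blast
qed

lemma LL_max:
  fixes f g :: "'a::metric_space \<Rightarrow> real"
  assumes f: "LL f" and g: "LL g"
  shows "LL (\<lambda>x. max (f x) (g x))"
proof (rule LLI)
  fix x
  obtain e L1 L2 where e: "e > 0" "L1 \<ge> 0" "L2 \<ge> 0" and l1: "L1-lipschitz_on (cball x e) f"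
     and l2: "L2-lipschitz_on (cball x e) g"
    using LL_two[OF f g] by metis
  have "(L1 + L2)-lipschitz_on (cball x e) (\<lambda>x. max (f x) (g x))"
  proof (rule lipschitz_onI)
    fix y z assume y: "y \<in> cball x e" and z: "z \<in> cball x e"
    have "dist (f y) (f z) \<le> L1 * dist y z" by (rule lipschitz_onD[OF l1 y z])
    moreover have "dist (g y) (g z) \<le> L2 * dist y z" by (rule lipschitz_onD[OF l2 y z])
    moreover have "0 \<le> L1 * dist y z" "0 \<le> L2 * dist y z" using e by auto
    moreover have "\<bar>max (f y) (g y) - max (f z) (g z)\<bar> \<le> \<bar>f y - f z\<bar> + \<bar>g y - g z\<bar>"
      by (simp add: max_def abs_if)
    ultimately show "dist (max (f y) (g y)) (max (f z) (g z)) \<le> (L1 + L2) * dist y z"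
      by (simp add: dist_real_def distrib_right)
  qed (use e in auto)
  then show "\<exists>e>0. \<exists>L. L-lipschitz_on (cball x e) (\<lambda>x. max (f x) (g x))" using e by blast
qed

lemma exp_lip: "(a::real) \<le> b \<Longrightarrow> exp b - exp a \<le> exp b * (b - a)"
proof -
  assume "a \<le> b"
  have "1 + (a - b) \<le> exp (a - b)" by (rule exp_ge_add_one_self)
  then have "exp b * (1 + (a - b)) \<le> exp b * exp (a - b)" by (intro mult_left_mono) auto
  then show ?thesis by (simp add: exp_diff algebra_simps)
qed

lemma LL_exp:
  fixes f :: "'a::metric_space \<Rightarrow> real"
  assumes "LL f" shows "LL (\<lambda>x. exp (f x))"
proof -
  have "LL (exp :: real \<Rightarrow> real)"
  proof (rule LLI)
    fix x :: real
    have "(exp (x + 1))-lipschitz_on (cball x 1) exp"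
    proof (rule lipschitz_on_leI)
      fix y z :: real assume y: "y \<in> cball x 1" and z: "z \<in> cball x 1" and yz: "y \<le> z"
      have "exp z - exp y \<le> exp z * (z - y)" by (rule exp_lip[OF yz])
      also have "\<dots> \<le> exp (x + 1) * (z - y)" using z yz
        by (intro mult_right_mono) (auto simp: dist_real_def)
      finally show "dist (exp y) (exp z) \<le> exp (x + 1) * dist y z"
        using yz by (simp add: dist_real_def abs_if)
    qed auto
    then show "\<exists>e>0. \<exists>L. L-lipschitz_on (cball x e) exp" by (intro exI[of _ 1]) auto
  qed
  then show ?thesis using LL_compose[OF assms] by blast
qed

lemma LL_inverse:
  fixes f :: "'a::metric_space \<Rightarrow> real"
  assumes f: "LL f" and pos: "\<And>x. f x > 0"
  shows "LL (\<lambda>x. inverse (f x))"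
proof (rule LLI)
  fix x
  obtain e1 L where e1: "e1 > 0" "L \<ge> 0" "L-lipschitz_on (cball x e1) f" using LLE[OF f] .
  define e where "e = min e1 (f x / (2 * (L + 1)))"
  have e: "e > 0" "e \<le> e1" "e \<le> f x / (2 * (L + 1))" using e1 pos[of x] by (auto simp: e_def)
  have l: "L-lipschitz_on (cball x e) f" using lip_shrink[OF e1(3) e(2)] .
  have lb: "f y \<ge> f x / 2" if y: "y \<in> cball x e" for y
  proof -
    have "dist (f x) (f y) \<le> L * dist x y" using l y e by (intro lipschitz_onD) auto
    also have "\<dots> \<le> L * (f x / (2 * (L + 1)))" using y e e1 by (intro mult_left_mono) auto
    also have "\<dots> \<le> f x / 2" using e1 pos[of x] by (simp add: field_simps)
    finally have "\<bar>f x - f y\<bar> \<le> f x / 2" by (simp add: dist_real_def)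
    then show ?thesis by arith
  qed
  define c where "c = f x / 2"
  have c: "c > 0" using pos[of x] by (simp add: c_def)
  have "(L / (c * c))-lipschitz_on (cball x e) (\<lambda>x. inverse (f x))"
  proof (rule lipschitz_onI)
    fix y z assume y: "y \<in> cball x e" and z: "z \<in> cball x e"
    have fy: "f y \<ge> c" and fz: "f z \<ge> c" using lb[OF y] lb[OF z] by (auto simp: c_def)
    have fy0: "f y > 0" and fz0: "f z > 0" using pos by auto
    have "inverse (f y) - inverse (f z) = (f z - f y) / (f y * f z)"
      using fy0 fz0 by (simp add: field_simps)
    then have "dist (inverse (f y)) (inverse (f z)) = \<bar>f z - f y\<bar> / (f y * f z)"
      using fy0 fz0 by (simp add: dist_real_def abs_divide abs_mult)
    also have "\<dots> \<le> \<bar>f z - f y\<bar> / (c * c)"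
    proof (rule divide_left_mono)
      show "c * c \<le> f y * f z" using fy fz c by (intro mult_mono) auto
    qed (use c fy0 fz0 in auto)
    also have "\<bar>f z - f y\<bar> \<le> L * dist y z"
      using lipschitz_onD[OF l y z] by (simp add: dist_real_def abs_minus_commute)
    then have "\<bar>f z - f y\<bar> / (c * c) \<le> L * dist y z / (c * c)"
      using c by (intro divide_right_mono) auto
    finally show "dist (inverse (f y)) (inverse (f z)) \<le> L / (c * c) * dist y z"
      by simp
  qed (use e1 c in auto)
  then show "\<exists>e>0. \<exists>L. L-lipschitz_on (cball x e) (\<lambda>x. inverse (f x))" using e by blast
qed



definition Kf :: "real \<Rightarrow> real \<Rightarrow> real \<Rightarrow> real" where
  "Kf \<epsilon> s t = min (s / \<epsilon>) 1 * ((1 - \<epsilon>) * s / max ((1 - \<epsilon>) * s) (- t))"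

lemma kappa2_eq:
  assumes "0 < \<epsilon>" "\<epsilon> < 1"
  shows "kappa2 \<epsilon> v w = Kf \<epsilon> ((norm v)\<^sup>2) (inner v w)"
proof (cases "v = 0")
  case True then show ?thesis by (simp add: kappa2_def Kf_def Let_def)
next
  case False
  define s where "s = (norm v)\<^sup>2"
  define t where "t = inner v w"
  define c where "c = 1 - \<epsilon>"
  have s: "s > 0" using False by (simp add: s_def)
  have c: "c > 0" using assms by (simp add: c_def)
  have cs: "c * s > 0" using s c by simp
  have one: "c * s / (c * s) = 1" using cs by (metis less_irrefl divide_self)
  have "kappa2 \<epsilon> v w = (if t \<ge> 0 then min (s / \<epsilon>) 1 else min (s / \<epsilon>) 1 * min (- c * s / t) 1)"
    by (simp add: kappa2_def Let_def s_def t_def c_def)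
  also have "\<dots> = min (s / \<epsilon>) 1 * (c * s / max (c * s) (- t))"
  proof (cases "t \<ge> 0")
    case True
    then have "max (c * s) (- t) = c * s" using cs by simp
    with one have "c * s / max (c * s) (- t) = 1" by simp
    then show ?thesis using True by (simp only: if_P mult_1_right)
  next
    case False
    have "min (- c * s / t) 1 = c * s / max (c * s) (- t)"
    proof (cases "c * s \<ge> - t")
      case True
      then have "- c * s / t \<ge> 1" using False by (simp add: field_simps)
      then show ?thesis using True cs one by simp
    next
      case F2: False
      then have "- c * s / t < 1" using False by (simp add: field_simps)
      moreover have "- c * s / t = c * s / (- t)" by simp
      ultimately show ?thesis using F2 by simp
    qed
    then show ?thesis using False by simp
  qed
  finally show ?thesis by (simp add: Kf_def s_def t_def c_def)
qed

lemma core: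
  fixes c s1 s2 D1 D2 t1 t2 :: real
  assumes c: "0 < c" and s2: "0 < s2" "s2 \<le> s1" and D1: "D1 \<ge> c * s1" and D2: "D2 \<ge> c * s2"
    and D: "\<bar>D1 - D2\<bar> \<le> c * \<bar>s1 - s2\<bar> + \<bar>t1 - t2\<bar>"
  shows "s2 * \<bar>c * s1 / D1 - c * s2 / D2\<bar> \<le> 2 * \<bar>s1 - s2\<bar> + \<bar>t1 - t2\<bar> / c"
proof -
  have d1: "D1 > 0" using c s2 D1 by (smt (verit) mult_pos_pos)
  have d2: "D2 > 0" using c s2 D2 by (smt (verit) mult_pos_pos)
  have eq: "s2 * (c * s1 / D1 - c * s2 / D2) = (c * s2 / D1) * (s1 - s2) + (c * s2 / D2) * (s2 / D1) * (D2 - D1)"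
    using d1 d2 by (simp add: field_simps)
  have a1: "c * s2 / D1 \<le> 1" using d1 D1 c s2 by (simp add: field_simps) (smt (verit) mult_left_mono c)
  have a0: "c * s2 / D1 \<ge> 0" using d1 c s2 by simp
  have b1: "c * s2 / D2 \<le> 1" using d2 D2 by simp
  have b0: "c * s2 / D2 \<ge> 0" using d2 c s2 by simp
  have e1: "s2 / D1 \<le> 1 / c" using d1 D1 c s2 by (simp add: field_simps) (smt (verit) mult_left_mono c)
  have e0: "s2 / D1 \<ge> 0" using d1 s2 by simp
  have "\<bar>(c * s2 / D1) * (s1 - s2)\<bar> \<le> \<bar>s1 - s2\<bar>"
  proof -
    have "\<bar>(c * s2 / D1) * (s1 - s2)\<bar> = (c * s2 / D1) * \<bar>s1 - s2\<bar>"
      using a0 by (simp only: abs_mult abs_of_nonneg)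
    also have "\<dots> \<le> \<bar>s1 - s2\<bar>" using a0 a1 by (intro mult_left_le_one_le) auto
    finally show ?thesis .
  qed
  moreover have "\<bar>(c * s2 / D2) * (s2 / D1) * (D2 - D1)\<bar> \<le> 1 * (1 / c) * \<bar>D1 - D2\<bar>"
    unfolding abs_mult using a1 b1 b0 e1 e0 c
    by (intro mult_mono) (auto simp: abs_minus_commute)
  moreover have "(1 / c) * \<bar>D1 - D2\<bar> \<le> (1 / c) * (c * \<bar>s1 - s2\<bar> + \<bar>t1 - t2\<bar>)"
    using D c by (intro mult_left_mono) auto
  moreover have "(1 / c) * (c * \<bar>s1 - s2\<bar> + \<bar>t1 - t2\<bar>) = \<bar>s1 - s2\<bar> + \<bar>t1 - t2\<bar> / c"
    using c by (simp add: field_simps)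
  ultimately have "\<bar>s2 * (c * s1 / D1 - c * s2 / D2)\<bar> \<le> 2 * \<bar>s1 - s2\<bar> + \<bar>t1 - t2\<bar> / c"
    unfolding eq using abs_triangle_ineq[of "c * s2 / D1 * (s1 - s2)" "c * s2 / D2 * (s2 / D1) * (D2 - D1)"] by linarith
  then show ?thesis using s2 by (simp add: abs_mult)
qed

lemma Kf_lip_ord:
  assumes e: "0 < \<epsilon>" "\<epsilon> < 1" and s: "0 \<le> s2" "s2 \<le> s1"
  shows "\<bar>Kf \<epsilon> s1 t1 - Kf \<epsilon> s2 t2\<bar> \<le> (3 * \<bar>s1 - s2\<bar> + \<bar>t1 - t2\<bar> / (1 - \<epsilon>)) / \<epsilon>"
proof -
  define c where "c = 1 - \<epsilon>"
  have c: "c > 0" using e by (simp add: c_def)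
  define h where "h s = min (s / \<epsilon>) 1" for s
  define D where "D s t = max (c * s) (- t)" for s t
  define G where "G s t = c * s / D s t" for s t
  have K: "Kf \<epsilon> s t = h s * G s t" for s t by (simp add: Kf_def h_def G_def D_def c_def)
  have G01: "0 \<le> G s t \<and> G s t \<le> 1" if "s \<ge> 0" for s t
  proof (cases "s = 0")
    case True then show ?thesis by (simp add: G_def)
  next
    case False
    then have "c * s > 0" using c that by simp
    moreover have "D s t \<ge> c * s" by (simp add: D_def)
    ultimately show ?thesis by (simp add: G_def)
  qed
  have h0: "0 \<le> h s" "h s \<le> s / \<epsilon>" if "s \<ge> 0" for s using that e by (auto simp: h_def)
  have hl: "\<bar>h s1 - h s2\<bar> \<le> \<bar>s1 - s2\<bar> / \<epsilon>"
  proof -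
    have "\<bar>h s1 - h s2\<bar> \<le> \<bar>s1 / \<epsilon> - s2 / \<epsilon>\<bar>" by (simp add: h_def min_def abs_if)
    also have "\<dots> = \<bar>s1 - s2\<bar> / \<epsilon>" using e by (simp add: diff_divide_distrib[symmetric])
    finally show ?thesis .
  qed
  have "0 \<le> \<bar>t1 - t2\<bar> / c" using c by simp
  show ?thesis
  proof (cases "s2 = 0")
    case True
    have "Kf \<epsilon> s2 t2 = 0" using True by (simp add: K h_def)
    moreover have "\<bar>Kf \<epsilon> s1 t1\<bar> \<le> s1 / \<epsilon>"
    proof -
      have "\<bar>Kf \<epsilon> s1 t1\<bar> = h s1 * G s1 t1" using G01[of s1 t1] h0[of s1] s by (simp add: K)
      also have "\<dots> \<le> h s1 * 1" using G01[of s1 t1] h0[of s1] s by (intro mult_left_mono) auto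
      also have "\<dots> \<le> s1 / \<epsilon>" using h0[of s1] s by simp
      finally show ?thesis .
    qed
    moreover have "s1 / \<epsilon> \<le> (3 * \<bar>s1 - s2\<bar> + \<bar>t1 - t2\<bar> / (1 - \<epsilon>)) / \<epsilon>"
      using True s e \<open>0 \<le> \<bar>t1 - t2\<bar> / c\<close> by (intro divide_right_mono) (auto simp: c_def)
    ultimately show ?thesis by simp
  next
    case False
    then have s2p: "s2 > 0" using s by simp
    have Dd: "\<bar>D s1 t1 - D s2 t2\<bar> \<le> c * \<bar>s1 - s2\<bar> + \<bar>t1 - t2\<bar>"
    proof -
      have "\<bar>D s1 t1 - D s2 t2\<bar> \<le> \<bar>c * s1 - c * s2\<bar> + \<bar>- t1 - - t2\<bar>"
        unfolding D_def by (simp add: max_def abs_if)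
      also have "\<dots> = c * \<bar>s1 - s2\<bar> + \<bar>t1 - t2\<bar>" using c
        by (simp add: right_diff_distrib[symmetric] abs_mult abs_minus_commute)
      finally show ?thesis .
    qed
    have cr: "s2 * \<bar>G s1 t1 - G s2 t2\<bar> \<le> 2 * \<bar>s1 - s2\<bar> + \<bar>t1 - t2\<bar> / c"
      unfolding G_def by (rule core[OF c s2p s(2) _ _ Dd]) (simp_all add: D_def)
    have eq: "Kf \<epsilon> s1 t1 - Kf \<epsilon> s2 t2 = (h s1 - h s2) * G s1 t1 + h s2 * (G s1 t1 - G s2 t2)"
      by (simp add: K algebra_simps)
    have a: "\<bar>(h s1 - h s2) * G s1 t1\<bar> \<le> \<bar>s1 - s2\<bar> / \<epsilon>"
    proof -
      have "\<bar>(h s1 - h s2) * G s1 t1\<bar> = \<bar>h s1 - h s2\<bar> * G s1 t1" using G01[of s1 t1] s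
        by (simp add: abs_mult)
      also have "\<dots> \<le> \<bar>h s1 - h s2\<bar> * 1" using G01[of s1 t1] s by (intro mult_left_mono) auto
      finally show ?thesis using hl by simp
    qed
    have b: "\<bar>h s2 * (G s1 t1 - G s2 t2)\<bar> \<le> (2 * \<bar>s1 - s2\<bar> + \<bar>t1 - t2\<bar> / c) / \<epsilon>"
    proof -
      have "\<bar>h s2 * (G s1 t1 - G s2 t2)\<bar> = h s2 * \<bar>G s1 t1 - G s2 t2\<bar>" using h0[of s2] s
        by (simp add: abs_mult)
      also have "\<dots> \<le> (s2 / \<epsilon>) * \<bar>G s1 t1 - G s2 t2\<bar>" using h0[of s2] s by (intro mult_right_mono) auto
      also have "\<dots> = (s2 * \<bar>G s1 t1 - G s2 t2\<bar>) / \<epsilon>" by simp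
      also have "\<dots> \<le> (2 * \<bar>s1 - s2\<bar> + \<bar>t1 - t2\<bar> / c) / \<epsilon>" using cr e by (intro divide_right_mono) auto
      finally show ?thesis .
    qed
    have "\<bar>Kf \<epsilon> s1 t1 - Kf \<epsilon> s2 t2\<bar> \<le> \<bar>s1 - s2\<bar> / \<epsilon> + (2 * \<bar>s1 - s2\<bar> + \<bar>t1 - t2\<bar> / c) / \<epsilon>"
      unfolding eq using a b abs_triangle_ineq[of "(h s1 - h s2) * G s1 t1" "h s2 * (G s1 t1 - G s2 t2)"]
      by linarith
    also have "\<dots> = (3 * \<bar>s1 - s2\<bar> + \<bar>t1 - t2\<bar> / (1 - \<epsilon>)) / \<epsilon>"
      by (simp add: c_def add_divide_distrib[symmetric])
    finally show ?thesis .
  qed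
qed

lemma Kf_lip:
  assumes e: "0 < \<epsilon>" "\<epsilon> < 1" and s: "0 \<le> s1" "0 \<le> s2"
  shows "\<bar>Kf \<epsilon> s1 t1 - Kf \<epsilon> s2 t2\<bar> \<le> (3 * \<bar>s1 - s2\<bar> + \<bar>t1 - t2\<bar> / (1 - \<epsilon>)) / \<epsilon>"
proof (cases "s2 \<le> s1")
  case True then show ?thesis using Kf_lip_ord[OF e s(2) True] by simp
next
  case False
  then have "\<bar>Kf \<epsilon> s2 t2 - Kf \<epsilon> s1 t1\<bar> \<le> (3 * \<bar>s2 - s1\<bar> + \<bar>t2 - t1\<bar> / (1 - \<epsilon>)) / \<epsilon>"
    using Kf_lip_ord[OF e s(1)] by simp
  then show ?thesis by (simp add: abs_minus_commute)
qed



lemma LL_Kf: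
  fixes f g :: "'a::metric_space \<Rightarrow> real"
  assumes e: "0 < \<epsilon>" "\<epsilon> < 1" and f: "LL f" and g: "LL g" and nn: "\<And>x. f x \<ge> 0"
  shows "LL (\<lambda>x. Kf \<epsilon> (f x) (g x))"
proof (rule LLI)
  fix x
  obtain r L1 L2 where r: "r > 0" "L1 \<ge> 0" "L2 \<ge> 0" and l1: "L1-lipschitz_on (cball x r) f"
     and l2: "L2-lipschitz_on (cball x r) g"
    using LL_two[OF f g] by metis
  have "((3 * L1 + L2 / (1 - \<epsilon>)) / \<epsilon>)-lipschitz_on (cball x r) (\<lambda>x. Kf \<epsilon> (f x) (g x))"
  proof (rule lipschitz_onI)
    fix y z assume y: "y \<in> cball x r" and z: "z \<in> cball x r"
    have a: "\<bar>f y - f z\<bar> \<le> L1 * dist y z" using lipschitz_onD[OF l1 y z] by (simp add: dist_real_def)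
    have b: "\<bar>g y - g z\<bar> \<le> L2 * dist y z" using lipschitz_onD[OF l2 y z] by (simp add: dist_real_def)
    have b': "\<bar>g y - g z\<bar> / (1 - \<epsilon>) \<le> L2 * dist y z / (1 - \<epsilon>)" using b e by (intro divide_right_mono) auto
    have "\<bar>Kf \<epsilon> (f y) (g y) - Kf \<epsilon> (f z) (g z)\<bar> \<le> (3 * \<bar>f y - f z\<bar> + \<bar>g y - g z\<bar> / (1 - \<epsilon>)) / \<epsilon>"
      by (rule Kf_lip[OF e nn nn])
    also have "\<dots> \<le> (3 * (L1 * dist y z) + L2 * dist y z / (1 - \<epsilon>)) / \<epsilon>"
      using a b' e by (intro divide_right_mono) auto
    also have "\<dots> = (3 * L1 + L2 / (1 - \<epsilon>)) / \<epsilon> * dist y z" by (simp add: field_simps)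
    finally show "dist (Kf \<epsilon> (f y) (g y)) (Kf \<epsilon> (f z) (g z)) \<le> (3 * L1 + L2 / (1 - \<epsilon>)) / \<epsilon> * dist y z"
      by (simp add: dist_real_def)
  next
    show "0 \<le> (3 * L1 + L2 / (1 - \<epsilon>)) / \<epsilon>" using r e by auto
  qed
  then show "\<exists>e>0. \<exists>L. L-lipschitz_on (cball x e) (\<lambda>x. Kf \<epsilon> (f x) (g x))" using r by blast
qed

lemma v_rep_eq:
  assumes "\<epsilon> > 0"
  shows "v_rep \<sigma>2 \<epsilon> r p i = \<sigma>2 *\<^sub>R (\<Sum>j\<in>UNIV.
     (max (r - norm (p $ i - p $ j)) 0 * inverse (norm (p $ i - p $ j) + \<epsilon>)) *\<^sub>R (p $ i - p $ j))"
proof -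
  have "(\<Sum>j\<in>{j. j \<noteq> i \<and> norm (p $ i - p $ j) \<le> r}.
        ((r - norm (p $ i - p $ j)) / (norm (p $ i - p $ j) + \<epsilon>)) *\<^sub>R (p $ i - p $ j))
     = (\<Sum>j\<in>UNIV. (max (r - norm (p $ i - p $ j)) 0 * inverse (norm (p $ i - p $ j) + \<epsilon>)) *\<^sub>R (p $ i - p $ j))"
    by (rule sum.mono_neutral_cong_left) (auto simp: divide_inverse)
  then show ?thesis by (simp add: v_rep_def)
qed

lemma LL_nth: "LL (\<lambda>p::'a::real_normed_vector ^ 'n. p $ i)"
  by (rule LL_bounded_linear[OF bounded_linear_vec_nth])

lemma LL_v_rep:
  assumes "\<epsilon> > 0"
  shows "LL (\<lambda>p::'a::euclidean_space ^ 'n. v_rep \<sigma>2 \<epsilon> r p i)"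
proof -
  have d: "LL (\<lambda>p::'a::euclidean_space ^ 'n. p $ i - p $ j)" for j
    by (intro LL_diff LL_nth)
  have "LL (\<lambda>p::'a ^ 'n. \<sigma>2 *\<^sub>R (\<Sum>j\<in>UNIV.
     (max (r - norm (p $ i - p $ j)) 0 * inverse (norm (p $ i - p $ j) + \<epsilon>)) *\<^sub>R (p $ i - p $ j)))"
    using assms
    by (intro LL_scaleR LL_const LL_sum LL_mult LL_max LL_diff LL_inverse LL_add LL_norm d finite_UNIV)
      (auto intro: add_nonneg_pos)
  then show ?thesis unfolding v_rep_eq[OF assms] .
qed



lemma LL_power2:
  fixes f :: "'a::metric_space \<Rightarrow> real"
  assumes "LL f" shows "LL (\<lambda>x. (f x)\<^sup>2)"
  unfolding power2_eq_square by (intro LL_mult assms)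

lemma LL_div1:
  fixes f :: "'a::metric_space \<Rightarrow> real"
  assumes "LL f" "\<And>x. f x > 0" shows "LL (\<lambda>x. 1 / f x)"
  using LL_inverse[OF assms] by (simp add: inverse_eq_divide)

lemma mass_pos:
  assumes "\<beta> > 0"
  shows "mass \<beta> q (p::'a::euclidean_space ^ 'n::finite) k > 0"
proof -
  have "(\<Sum>i\<in>(UNIV::'n set). exp (- \<beta> * (norm (q k - p $ i))\<^sup>2)) > 0"
    by (intro sum_pos) auto
  then show ?thesis by (simp add: mass_def)
qed

lemma LL_mass:
  "LL (\<lambda>p::'a::euclidean_space ^ 'n::finite. mass \<beta> q p k)"
  unfolding mass_def
  by (intro LL_mult LL_const LL_sum LL_exp LL_power2 LL_norm LL_diff LL_nth) auto

lemma LL_v_ms: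
  assumes "\<beta> > 0"
  shows "LL (\<lambda>p::'a::euclidean_space ^ 'n::finite. v_ms \<beta> \<sigma>1 (q::'m::finite \<Rightarrow> 'a) p i)"
proof -
  have den: "(\<Sum>k\<in>UNIV. inverse (mass \<beta> q p k) * exp (- \<beta> * (norm (q k - p $ i))\<^sup>2)) > 0"
    for p :: "'a ^ 'n"
    by (intro sum_pos mult_pos_pos positive_imp_inverse_positive mass_pos assms) auto
  have im: "LL (\<lambda>p::'a ^ 'n. inverse (mass \<beta> q p k))" for k
    using mass_pos[OF assms] by (intro LL_inverse LL_mass)
  show ?thesis
    unfolding v_ms_def
    by (intro LL_scaleR LL_div1 LL_const LL_sum LL_mult LL_exp LL_power2 LL_norm LL_diff LL_nth
        im den) auto
qed


theorem lemma6:
  fixes q :: "'m::finite \<Rightarrow> 'a::euclidean_space"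
    and \<beta> \<sigma>1 \<sigma>2 \<epsilon> r_avoid :: real
    and i :: "'n::finite"
  assumes "CARD('n) \<ge> 2"
    and "\<beta> > 0" and "\<sigma>1 > 0" and "\<sigma>2 > 0"
    and "0 < \<epsilon>" and "\<epsilon> < 1" and "r_avoid > 0"
  shows "locally_lipschitz_on (UNIV :: ('a ^ 'n) set)
           (\<lambda>p. v_cv \<beta> \<sigma>1 \<sigma>2 \<epsilon> r_avoid q p i)"
proof -
  have ms: "LL (\<lambda>p::'a ^ 'n. v_ms \<beta> \<sigma>1 q p i)" by (rule LL_v_ms) fact
  have rp: "LL (\<lambda>p::'a ^ 'n. v_rep \<sigma>2 \<epsilon> r_avoid p i)" by (rule LL_v_rep) fact
  have "LL (\<lambda>p::'a ^ 'n. Kf \<epsilon> ((norm (v_ms \<beta> \<sigma>1 q p i))\<^sup>2)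
           (inner (v_ms \<beta> \<sigma>1 q p i) (v_rep \<sigma>2 \<epsilon> r_avoid p i)) *\<^sub>R v_rep \<sigma>2 \<epsilon> r_avoid p i)"
    by (intro LL_scaleR LL_Kf LL_power2 LL_norm LL_inner ms rp assms) simp
  moreover have "(\<lambda>p::'a ^ 'n. v_cv \<beta> \<sigma>1 \<sigma>2 \<epsilon> r_avoid q p i) =
     (\<lambda>p. Kf \<epsilon> ((norm (v_ms \<beta> \<sigma>1 q p i))\<^sup>2)
           (inner (v_ms \<beta> \<sigma>1 q p i) (v_rep \<sigma>2 \<epsilon> r_avoid p i)) *\<^sub>R v_rep \<sigma>2 \<epsilon> r_avoid p i)"
    by (intro ext) (simp add: v_cv_def kappa2_eq[OF assms(5,6)])
  ultimately have "LL (\<lambda>p::'a ^ 'n. v_cv \<beta> \<sigma>1 \<sigma>2 \<epsilon> r_avoid q p i)" by simp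
  then show ?thesis by (simp add: LL_def locally_lipschitz_on_def)
qed

end
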